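(* Suppose that $2\le n_0<\infty$ and that $S$ is submultiplicative on $[1,n_0]$. Then for every $\varepsilon>0$ and every $N_0>n_0$ there exists an extension of $S$ to $[1,N_0]$ which is submultiplicative on $[1,N_0]$ and satisfies $S(N_0)<S(n_0)+\varepsilon$.
   Context: Let $2\le n_0\le\infty$ and let $S$ be a real-valued function on $[1,n_0]$ (on $[1,\infty)$ if $n_0=\infty$). $S$ is called submultiplicative on $[1,n_0]$ if: (a) $S$ is piecewise-linear, continuous, strictly increasing and concave; (b) $S(x)=x$ for $1\le x\le 2$; (c) $S(xy)\le S(x)S(y)$ for all $x,y$ with $1\le x,y,xy\le n_0$. *)

theory Defs
  imports "HOL-Analysis.Analysis"
begin

definition piecewise_linear_on :: "real \<Rightarrow> real \<Rightarrow> (real \<Rightarrow> real) \<Rightarrow> bool" where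
  "piecewise_linear_on a b f \<longleftrightarrow>
     (\<exists>P. finite P \<and> a \<in> P \<and> b \<in> P \<and> P \<subseteq> {a..b} \<and>
        (\<forall>x\<in>P. \<forall>y\<in>P. x < y \<and> {x<..<y} \<inter> P = {} \<longrightarrow>
            (\<exists>m c. \<forall>t\<in>{x..y}. f t = m * t + c)))"

definition submultiplicative_on :: "real \<Rightarrow> (real \<Rightarrow> real) \<Rightarrow> bool" where
  "submultiplicative_on n0 S \<longleftrightarrow>
     piecewise_linear_on 1 n0 S \<and>
     continuous_on {1..n0} S \<and>
     strict_mono_on {1..n0} S \<and>
     concave_on {1..n0} S \<and>
     (\<forall>x\<in>{1..2}. S x = x) \<and>
     (\<forall>x y. 1 \<le> x \<longrightarrow> 1 \<le> y \<longrightarrow> x * y \<le> n0 \<longrightarrow> S (x * y) \<le> S x * S y)"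

end

theory Submission
  imports Defs
begin

lemma conc3:
  fixes f :: "real \<Rightarrow> real"
  assumes "concave_on A f" "x\<in>A" "y\<in>A" "x \<le> z" "z \<le> y" "x<y"
  shows "f z * (y-x) \<ge> f x * (y-z) + f y * (z-x)"
proof -
  define t where "t = (z-x)/(y-x)"
  have t: "0 \<le> t" "t \<le> 1" using assms by (auto simp: t_def field_simps)
  have tt: "t*(y-x) = z-x" using assms(6) by (simp add: t_def)
  have z: "(1-t) *\<^sub>R x + t *\<^sub>R y = z" using tt by (simp add: algebra_simps)
  have "f z \<ge> (1-t)*f x + t* f y" using concave_onD[OF assms(1) t assms(2,3)] z by simp
  hence "f z * (y-x) \<ge> ((1-t)*f x + t* f y)*(y-x)" using assms by (intro mult_right_mono) auto
  also have "((1-t)*f x + t* f y)*(y-x) = f x * (y-z) + f y * (z-x)"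
  proof -
    have e: "y - z = (1-t)*(y-x)" "z - x = t*(y-x)" using tt by (auto simp: algebra_simps)
    show ?thesis unfolding e by (simp add: algebra_simps)
  qed
  finally show ?thesis by simp
qed

lemma conc3I:
  fixes f :: "real \<Rightarrow> real"
  assumes "\<And>x z y. a \<le> x \<Longrightarrow> x < z \<Longrightarrow> z < y \<Longrightarrow> y \<le> b \<Longrightarrow> f z * (y-x) \<ge> f x * (y-z) + f y * (z-x)"
  shows "concave_on {a..b} f"
proof -
  have "convex_on {a..b} (\<lambda>x. - f x)"
  proof (rule convex_onI)
    fix t x y :: real assume t: "0<t" "t<1" and xy: "x \<in> {a..b}" "y \<in> {a..b}"
    define z where "z = (1-t)*x + t*y"
    show "- f ((1-t) *\<^sub>R x + t *\<^sub>R y) \<le> (1-t) * (- f x) + t * (- f y)"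
    proof (cases x y rule: linorder_cases)
      case less
      have zx: "z - x = t*(y-x)" "y - z = (1-t)*(y-x)" by (simp_all add: z_def algebra_simps)
      have "t*(y-x) > 0" "(1-t)*(y-x) > 0" using t less by auto
      hence xz: "x < z" "z < y" using zx by (smt (verit))+
      from assms[OF _ this] xy have "f z*(y-x) \<ge> f x*(y-z) + f y*(z-x)" by auto
      moreover have "f x*(y-z) + f y*(z-x) = ((1-t)*f x + t*f y)*(y-x)" unfolding zx by (simp add: algebra_simps)
      ultimately have "f z*(y-x) \<ge> ((1-t)*f x + t*f y)*(y-x)" by linarith
      hence "f z \<ge> (1-t)*f x + t*f y" using less by simp
      thus ?thesis by (simp add: z_def)
    next
      case equal
      thus ?thesis by (simp add: algebra_simps)
    next
      case greater
      have zx: "x - z = t*(x-y)" "z - y = (1-t)*(x-y)" by (simp_all add: z_def algebra_simps)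
      have "t*(x-y) > 0" "(1-t)*(x-y) > 0" using t greater by auto
      hence "y < z" "z < x" using zx by (smt (verit))+
      from assms[OF _ this] xy have "f z*(x-y) \<ge> f y*(x-z) + f x*(z-y)" by auto
      moreover have "f y*(x-z) + f x*(z-y) = ((1-t)*f x + t*f y)*(x-y)" unfolding zx by (simp add: algebra_simps)
      ultimately have "f z*(x-y) \<ge> ((1-t)*f x + t*f y)*(x-y)" by linarith
      hence "f z \<ge> (1-t)*f x + t*f y" using greater by simp
      thus ?thesis by (simp add: z_def)
    qed
  qed (simp add: convex_real_interval)
  thus ?thesis by (simp add: concave_on_def)
qed


theorem lemma2p3:
  fixes n0 :: real and S :: "real \<Rightarrow> real"
  assumes "2 \<le> n0"
    and "submultiplicative_on n0 S"
  shows "\<forall>\<epsilon>>0. \<forall>N0>n0. \<exists>T :: real \<Rightarrow> real.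
           (\<forall>x\<in>{1..n0}. T x = S x) \<and>
           submultiplicative_on N0 T \<and>
           T N0 < S n0 + \<epsilon>"
proof (intro allI impI)
  fix \<epsilon> N0 :: real assume eps: "\<epsilon> > 0" and N0: "N0 > n0"
  from assms(2) have PL: "piecewise_linear_on 1 n0 S" and cont: "continuous_on {1..n0} S"
    and smS: "strict_mono_on {1..n0} S" and cS: "concave_on {1..n0} S"
    and id12: "\<forall>x\<in>{1..2}. S x = x"
    and subS: "\<forall>x y. 1 \<le> x \<longrightarrow> 1 \<le> y \<longrightarrow> x*y \<le> n0 \<longrightarrow> S(x*y) \<le> S x * S y"
    unfolding submultiplicative_on_def by auto
  from PL obtain P where P: "finite P" "1\<in>P" "n0\<in>P" "P \<subseteq> {1..n0}"
    and Paff: "\<forall>x\<in>P. \<forall>y\<in>P. x < y \<and> {x<..<y} \<inter> P = {} \<longrightarrow> (\<exists>m c. \<forall>t\<in>{x..y}. S t = m*t + c)"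
    unfolding piecewise_linear_on_def by blast
  define Q where "Q = {q\<in>P. q < n0}"
  have Qf: "finite Q" "1 \<in> Q" using P assms(1) by (auto simp: Q_def)
  define p where "p = Max Q"
  have pQ: "p \<in> Q" using Qf unfolding p_def by (intro Max_in) auto
  have pP: "p\<in>P" "p<n0" "1 \<le> p" using pQ P by (auto simp: Q_def)
  have gap: "{p<..<n0} \<inter> P = {}"
  proof (rule ccontr)
    assume "{p<..<n0} \<inter> P \<noteq> {}" then obtain q where "q\<in>P" "p<q" "q<n0" by auto
    hence "q \<in> Q" by (simp add: Q_def)
    hence "q \<le> p" using Qf unfolding p_def by simp
    with \<open>p<q\<close> show False by simp
  qed
  obtain m c where mc: "\<forall>t\<in>{p..n0}. S t = m*t + c" using Paff pP P(3) gap by blast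
  have S1: "S 1 = 1" and S2: "S 2 = 2" using id12 by auto
  have "S p < S n0" using pP by (intro strict_mono_onD[OF smS]) auto
  moreover have "S p = m*p+c" "S n0 = m*n0 + c" using mc pP by auto
  ultimately have "m*(n0-p) > 0" by (simp add: algebra_simps)
  hence mpos: "m > 0" using pP by (simp add: zero_less_mult_iff)
  have Sn0: "S n0 = m*n0 + c" using mc pP by auto
  have Sbnd: "S t \<le> m*t + c" if "1 \<le> t" "t \<le> n0" for t
  proof (cases "t \<ge> p")
    case True thus ?thesis using mc that by auto
  next
    case False
    have Sp: "S p = m*p+c" using mc pP by auto
    have "(m*p+c) * (n0 - t) \<ge> S t * (n0 - p) + (m*n0+c) * (p - t)"
      using conc3[OF cS, of t n0 p] that False pP Sp Sn0 by auto
    moreover have "(m*p+c)*(n0-t) - (m*n0+c)*(p-t) = (m*t+c)*(n0-p)" by (simp add: algebra_simps)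
    ultimately have "S t * (n0-p) \<le> (m*t+c)*(n0-p)" using Sn0 by linarith
    thus ?thesis using pP by simp
  qed
  have slope: "S b - S a \<ge> m*(b-a)" if "1 \<le> a" "a \<le> b" "b \<le> n0" for a b
  proof (cases "b \<ge> p")
    case True thus ?thesis using mc that Sbnd[of a] by (auto simp: algebra_simps)
  next
    case False
    show ?thesis
    proof (cases "a = b")
      case True thus ?thesis by simp
    next
      case ab: False
      have c1: "S b * (n0 - a) \<ge> S a * (n0 - b) + S n0 * (b - a)"
        using conc3[OF cS, of a n0 b] that False pP ab by auto
      have c2: "(c - (S a - m*a))*(b-a) \<ge> 0" using Sbnd[of a] that by simp
      have e: "S a * (n0 - b) + (m*n0+c) * (b - a) - m*b*(n0-a) = (S a - m*a)*(n0-a) + (c - (S a - m*a))*(b-a)"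
        by (simp add: algebra_simps)
      have "(S b - m*b)*(n0-a) \<ge> (S a - m*a)*(n0-a)"
        using c1 c2 e Sn0 by (simp add: algebra_simps)
      hence "S b - m*b \<ge> S a - m*a" using that False pP by (simp add: mult_le_cancel_right)
      thus ?thesis by (simp add: algebra_simps)
    qed
  qed
  have N0gt: "N0 > 2" using N0 assms(1) by simp
  define \<delta> where "\<delta> = min (min m (1/N0) / N0) (\<epsilon> / (2*(N0-n0)))"
  have dpos: "\<delta> > 0" using mpos N0gt eps N0 by (simp add: \<delta>_def)
  have "\<delta> \<le> min m (1/N0) / N0" by (simp add: \<delta>_def)
  hence dN: "\<delta>*N0 \<le> min m (1/N0)" using N0gt by (simp add: field_simps)
  have "\<delta> \<le> \<epsilon> / (2*(N0-n0))" by (simp add: \<delta>_def)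
  hence "\<delta>*(N0-n0) \<le> \<epsilon>/2" using N0 by (simp add: field_simps)
  hence deps: "\<delta>*(N0-n0) < \<epsilon>" using eps by simp
  have "\<delta> \<le> \<delta>*N0" using dpos N0gt by simp
  hence dm: "\<delta> \<le> m" using dN by simp
  define T where "T t = S (min t n0) + \<delta>*(max t n0 - n0)" for t
  have Tlo: "T t = S t" if "t \<le> n0" for t using that by (simp add: T_def)
  have Thi: "T t = S n0 + \<delta>*(t-n0)" if "n0 \<le> t" for t using that by (simp add: T_def)
  have Sge1: "S t \<ge> 1" if "1 \<le> t" "t \<le> n0" for t using slope[of 1 t] that mpos S1
    by (smt (verit) mult_nonneg_nonneg)
  have Sn02: "S n0 \<ge> 2" using slope[of 2 n0] assms(1) mpos S2 by (smt (verit) mult_nonneg_nonneg)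
  have TleL: "S t \<le> S n0 + \<delta>*(t-n0)" if "1 \<le> t" "t \<le> n0" for t
  proof -
    have "m*(n0-t) \<ge> \<delta>*(n0-t)" using dm that by (intro mult_right_mono) auto
    thus ?thesis using slope[of t n0] that by (simp add: algebra_simps)
  qed
  show "\<exists>T :: real \<Rightarrow> real. (\<forall>x\<in>{1..n0}. T x = S x) \<and> submultiplicative_on N0 T \<and> T N0 < S n0 + \<epsilon>"
  proof (intro exI conjI)
    show "\<forall>x\<in>{1..n0}. T x = S x" using Tlo by auto
    show "T N0 < S n0 + \<epsilon>" using Thi deps N0 by simp
    show "submultiplicative_on N0 T" unfolding submultiplicative_on_def
    proof (intro conjI)
      show "piecewise_linear_on 1 N0 T" unfolding piecewise_linear_on_def
      proof (intro exI[of _ "insert N0 P"] conjI ballI impI)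
        show "finite (insert N0 P)" "1 \<in> insert N0 P" "N0 \<in> insert N0 P" using P by auto
        show "insert N0 P \<subseteq> {1..N0}" using P N0 N0gt by auto
        fix x y assume xP: "x \<in> insert N0 P" and yP: "y \<in> insert N0 P"
          and xy: "x < y \<and> {x<..<y} \<inter> insert N0 P = {}"
        show "\<exists>m c. \<forall>t\<in>{x..y}. T t = m*t + c"
        proof (cases "y \<le> n0")
          case True
          hence "x \<in> P" "y \<in> P" using xP yP xy N0 by auto
          moreover have "{x<..<y} \<inter> P = {}" using xy by auto
          ultimately obtain m' c' where "\<forall>t\<in>{x..y}. S t = m'*t + c'" using Paff xy by blast
          thus ?thesis using True Tlo by auto
        next
          case False
          have "x \<ge> n0"
          proof (rule ccontr)
            assume "\<not> x \<ge> n0"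
            hence "n0 \<in> {x<..<y} \<inter> insert N0 P" using False P by auto
            thus False using xy by blast
          qed
          hence "\<forall>t\<in>{x..y}. T t = \<delta>*t + (S n0 - \<delta>*n0)" using Thi by (auto simp: algebra_simps)
          thus ?thesis by blast
        qed
      qed
      show "continuous_on {1..N0} T" unfolding T_def
      proof (intro continuous_intros)
        show "continuous_on {1..N0} (\<lambda>t. S (min t n0))"
          by (rule continuous_on_compose2[OF cont, of _ "\<lambda>t. min t n0"])
             (use assms(1) in \<open>auto intro!: continuous_intros\<close>)
      qed
      show "strict_mono_on {1..N0} T"
      proof (rule strict_mono_onI)
        fix r s assume r: "r \<in> {1..N0}" and s: "s \<in> {1..N0}" and rs: "r < s"
        show "T r < T s"
        proof (cases "s \<le> n0")
          case True thus ?thesis using Tlo r s rs strict_mono_onD[OF smS, of r s] by auto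
        next
          case False
          show ?thesis
          proof (cases "r \<ge> n0")
            case True thus ?thesis using Thi False rs dpos by simp
          next
            case rF: False
            have "m*(n0-r) \<ge> 0" using mpos rF by simp
            hence "S r \<le> S n0" using slope[of r n0] r rF by auto
            moreover have "\<delta>*(s-n0) > 0" using dpos False by simp
            ultimately show ?thesis using Tlo[of r] Thi[of s] rF False by simp
          qed
        qed
      qed
      show "concave_on {1..N0} T"
      proof (rule conc3I)
        fix x z y assume x1: "1 \<le> x" and xz: "x < z" and zy: "z < y" and yN: "y \<le> N0"
        show "T z * (y-x) \<ge> T x * (y-z) + T y * (z-x)"
        proof (cases "y \<le> n0")
          case True thus ?thesis using Tlo conc3[OF cS, of x y z] x1 xz zy by auto
        next
          case yF: False
          show ?thesis
          proof (cases "n0 \<le> x")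
            case True
            have "(S n0 + \<delta>*(z-n0))*(y-x) = (S n0 + \<delta>*(x-n0))*(y-z) + (S n0 + \<delta>*(y-n0))*(z-x)"
              by (simp add: algebra_simps)
            thus ?thesis using Thi[of x] Thi[of y] Thi[of z] xz zy True by simp
          next
            case xF: False
            show ?thesis
            proof (cases "n0 \<le> z")
              case True
              have "T x \<le> S n0 + \<delta>*(x-n0)" using Tlo[of x] xF TleL[of x] x1 by simp
              hence "T x * (y-z) \<le> (S n0 + \<delta>*(x-n0))*(y-z)" using zy by (intro mult_right_mono) auto
              moreover have "(S n0 + \<delta>*(z-n0))*(y-x) = (S n0 + \<delta>*(x-n0))*(y-z) + (S n0 + \<delta>*(y-n0))*(z-x)"
                by (simp add: algebra_simps)
              ultimately show ?thesis using Thi[of z] Thi[of y] True yF by simp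
            next
              case zF: False
              have c1: "S z * (n0-x) \<ge> S x * (n0-z) + S n0 * (z-x)"
                using conc3[OF cS, of x n0 z] x1 xz zF xF by auto
              hence c1': "(S z * (n0-x))*(y-x) \<ge> (S x * (n0-z) + S n0 * (z-x))*(y-x)"
                using xz zy by (intro mult_right_mono) auto
              define K where "K = S n0 - S x - \<delta>*(n0-x)"
              have K: "K \<ge> 0" using TleL[of x] x1 xF by (simp add: K_def algebra_simps)
              have Kp: "K*((z-x)*(y-n0)) \<ge> 0" using K xz yF by simp
              have e: "(S x * (n0-z) + S n0 * (z-x))*(y-x) - (n0-x)*(S x * (y-z) + (S n0 + \<delta>*(y-n0)) * (z-x))
                = K*((z-x)*(y-n0))" by (simp add: K_def algebra_simps)
              have "(n0-x)*(S x * (y-z) + (S n0 + \<delta>*(y-n0)) * (z-x)) \<le> (n0-x)*(S z * (y-x))"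
                using c1' e Kp by (simp add: algebra_simps)
              hence "S x * (y-z) + (S n0 + \<delta>*(y-n0)) * (z-x) \<le> S z * (y-x)" using xF by simp
              thus ?thesis using Tlo[of x] Tlo[of z] Thi[of y] xF zF yF by simp
            qed
          qed
        qed
      qed
      show "\<forall>x\<in>{1..2}. T x = x" using Tlo id12 assms(1) by auto
      have C: "T (a*b) \<le> T a * T b" if a1: "1 \<le> a" and bn: "n0 < b" and abN: "a*b \<le> N0" for a b
      proof -
        have bab: "b \<le> a*b" using a1 bn assms(1) by simp
        have aab: "a \<le> a*b" using a1 bn assms(1) by simp
        have Tb: "T b = S n0 + \<delta>*(b-n0)" using Thi bn by simp
        have Tb1: "T b \<ge> 1" using Tb Sn02 dpos bn by (smt (verit) mult_pos_pos)
        have Tab: "T (a*b) = S n0 + \<delta>*(a*b-n0)" using Thi bn bab by simp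
        have ediff: "T (a*b) - T b = \<delta>*b*(a-1)" using Tab Tb by (simp add: algebra_simps)
        have Ta: "T a - 1 \<ge> min m (1/N0) * (a-1) \<and> T a \<ge> 1"
        proof (cases "a \<le> n0")
          case True
          have "m*(a-1) \<ge> min m (1/N0) * (a-1)" using a1 by (intro mult_right_mono) auto
          thus ?thesis using slope[of 1 a] True a1 S1 Tlo[of a] mpos by (smt (verit) mult_nonneg_nonneg)
        next
          case False
          have "T a \<ge> S n0" using Thi[of a] False dpos by (smt (verit) mult_pos_pos)
          moreover have "min m (1/N0) * (a-1) \<le> (1/N0)*(a-1)" using a1 by (intro mult_right_mono) auto
          moreover have "(1/N0)*(a-1) \<le> 1" using aab abN N0gt by (simp add: field_simps)
          ultimately show ?thesis using Sn02 by linarith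
        qed
        have "(T a - 1)*T b \<ge> (T a - 1)*1" using Ta Tb1 by (intro mult_left_mono) auto
        moreover have "min m (1/N0) * (a-1) \<ge> (\<delta>*N0)*(a-1)" using dN a1 by (intro mult_right_mono) auto
        moreover have "(\<delta>*N0)*(a-1) \<ge> (\<delta>*b)*(a-1)" using dpos a1 bab abN
          by (intro mult_right_mono) auto
        ultimately have "T a * T b - T b \<ge> \<delta>*b*(a-1)" using Ta by (simp add: algebra_simps)
        thus ?thesis using ediff by simp
      qed
      show "\<forall>x y. 1 \<le> x \<longrightarrow> 1 \<le> y \<longrightarrow> x * y \<le> N0 \<longrightarrow> T (x * y) \<le> T x * T y"
      proof (intro allI impI)
        fix x y :: real assume x1: "1 \<le> x" and y1: "1 \<le> y" and xyN: "x*y \<le> N0"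
        have xxy: "x \<le> x*y" and yxy: "y \<le> x*y" using x1 y1 by (simp_all add: mult_le_cancel_left1 mult_le_cancel_right1)
        show "T (x*y) \<le> T x * T y"
        proof (cases "x*y \<le> n0")
          case True
          hence "x \<le> n0" "y \<le> n0" using xxy yxy by linarith+
          thus ?thesis using subS x1 y1 True Tlo[of x] Tlo[of y] Tlo[of "x*y"] by simp
        next
          case xyF: False
          show ?thesis
          proof (cases "y > n0")
            case True thus ?thesis using C x1 xyN by blast
          next
            case yF: False
            show ?thesis
            proof (cases "x > n0")
              case True thus ?thesis using C[of y x] y1 xyN by (simp add: mult.commute)
            next
              case xF: False
              define x' where "x' = n0/y"
              have ypos: "y > 0" using y1 by simp
              have x'y: "x'*y = n0" using ypos by (simp add: x'_def)
              have x'1: "1 \<le> x'" using yF ypos by (simp add: x'_def field_simps)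
              have x'x: "x' < x" using xyF ypos by (simp add: x'_def field_simps)
              have "S n0 \<le> S x' * S y" using subS x'1 y1 x'y by (metis order.refl)
              have sl: "S x - S x' \<ge> m*(x-x')" using slope[of x' x] x'1 x'x xF by simp
              have Sy1: "S y \<ge> 1" using Sge1 y1 yF by simp
              have "S x * S y \<ge> (S x' + m*(x-x'))*S y" using sl Sy1 by (intro mult_right_mono) auto
              moreover have "m*(x-x')*S y \<ge> m*(x-x')*1" using Sy1 mpos x'x by (intro mult_left_mono) auto
              moreover have "x*y - n0 = (x-x')*y" using x'y by (simp add: algebra_simps)
              moreover have "\<delta>*((x-x')*y) \<le> \<delta>*((x-x')*N0)" using dpos x'x yF N0
                by (intro mult_left_mono) auto
              moreover have "\<delta>*N0*(x-x') \<le> m*(x-x')" using dN x'x by (intro mult_right_mono) auto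
              ultimately have "S n0 + \<delta>*(x*y-n0) \<le> S x * S y" using \<open>S n0 \<le> S x' * S y\<close>
                by (simp add: algebra_simps)
              thus ?thesis using Thi[of "x*y"] Tlo[of x] Tlo[of y] xyF xF yF by simp
            qed
          qed
        qed
      qed
    qed
  qed
qed

end
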